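(* Let $p$ be an odd prime, $P$ a finite $p$-group, $N$ a normal subgroup of $P$, and $j\ge 1$ an integer. If $\operatorname{pwh}_P(N)\le j$, then $[N,{}_jP]\le N^p$.
   Context: For a finite $p$-group $P$, a normal subgroup $N$ of $P$ is powerfully embedded in $P$ if $[N,P]\le N^p$ when $p$ is odd, and $[N,P]\le N^4$ when $p=2$ (here $N^{k}$ denotes the subgroup generated by all $k$-th powers of elements of $N$). An $\eta$-series of $P$ is an ascending series $1=N_0\le N_1\le N_2\le\cdots$ of normal subgroups of $P$ such that $N_{i+1}/N_i$ is powerfully embedded in $P/N_i$ for all $i$. For $N\trianglelefteq P$, the powerful height $\operatorname{pwh}_P(N)$ is the smallest $k$ such that there is an $\eta$-series with $N_k=N$. $[N,{}_jP]$ denotes $[N,P,\ldots,P]$ with $j$ copies of $P$, defined recursively by $[N,{}_1P]=[N,P]$ and $[N,{}_{j+1}P]=[[N,{}_jP],P]$. *)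

theory Defs
  imports "HOL-Algebra.Algebra"
begin

definition comm_sub :: "('a, 'b) monoid_scheme \<Rightarrow> 'a set \<Rightarrow> 'a set \<Rightarrow> 'a set" where
  "comm_sub G A B = generate G {inv\<^bsub>G\<^esub> a \<otimes>\<^bsub>G\<^esub> inv\<^bsub>G\<^esub> b \<otimes>\<^bsub>G\<^esub> a \<otimes>\<^bsub>G\<^esub> b | a b. a \<in> A \<and> b \<in> B}"

definition power_sub :: "('a, 'b) monoid_scheme \<Rightarrow> nat \<Rightarrow> 'a set \<Rightarrow> 'a set" where
  "power_sub G k N = generate G {x [^]\<^bsub>G\<^esub> k | x. x \<in> N}"

fun comm_iter :: "('a, 'b) monoid_scheme \<Rightarrow> 'a set \<Rightarrow> nat \<Rightarrow> 'a set" where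
  "comm_iter G N 0 = N"
| "comm_iter G N (Suc j) = comm_sub G (comm_iter G N j) (carrier G)"

definition finite_p_group :: "('a, 'b) monoid_scheme \<Rightarrow> nat \<Rightarrow> bool" where
  "finite_p_group G p \<longleftrightarrow> group G \<and> finite (carrier G) \<and> (\<exists>n. card (carrier G) = p ^ n)"

definition powerfully_embedded :: "('a, 'b) monoid_scheme \<Rightarrow> nat \<Rightarrow> 'a set \<Rightarrow> bool" where
  "powerfully_embedded G p N \<longleftrightarrow> N \<lhd> G \<and>
     comm_sub G N (carrier G) \<subseteq> power_sub G (if p = 2 then 4 else p) N"

definition eta_series :: "('a, 'b) monoid_scheme \<Rightarrow> nat \<Rightarrow> (nat \<Rightarrow> 'a set) \<Rightarrow> bool" where
  "eta_series G p Ns \<longleftrightarrow> Ns 0 = {\<one>\<^bsub>G\<^esub>} \<and>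
     (\<forall>i. Ns i \<lhd> G \<and> Ns i \<subseteq> Ns (Suc i) \<and>
          powerfully_embedded (G Mod (Ns i)) p ((\<lambda>x. Ns i #>\<^bsub>G\<^esub> x) ` Ns (Suc i)))"

definition pwh :: "('a, 'b) monoid_scheme \<Rightarrow> nat \<Rightarrow> 'a set \<Rightarrow> nat" where
  "pwh G p N = (LEAST k. \<exists>Ns. eta_series G p Ns \<and> Ns k = N)"

end

theory Submission
  imports Defs
begin

lemma conj_hom:
  fixes G (structure)
  assumes "group G" "g \<in> carrier G"
  shows "(\<lambda>x. g \<otimes>\<^bsub>G\<^esub> x \<otimes>\<^bsub>G\<^esub> inv\<^bsub>G\<^esub> g) \<in> hom G G"
proof -
  interpret group G by fact
  show ?thesis unfolding hom_def
  proof (auto simp: assms)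
    fix x y assume x: "x \<in> carrier G" and y: "y \<in> carrier G"
    have "g \<otimes> x \<otimes> inv g \<otimes> (g \<otimes> y \<otimes> inv g) = g \<otimes> x \<otimes> (inv g \<otimes> g) \<otimes> y \<otimes> inv g"
      using x y assms by (simp add: m_assoc) (metis inv_closed l_inv l_one m_assoc m_closed)
    also have "\<dots> = g \<otimes> (x \<otimes> y) \<otimes> inv g" using x y assms by (simp add: m_assoc flip: m_assoc)
    finally show "g \<otimes> (x \<otimes> y) \<otimes> inv g = g \<otimes> x \<otimes> inv g \<otimes> (g \<otimes> y \<otimes> inv g)" by simp
  qed
qed

lemma power_sub_normal:
  fixes G (structure)
  assumes "group G" "N \<lhd> G"
  shows "power_sub G p N \<lhd> G"
proof -
  interpret group G by fact
  interpret nN: normal N G by fact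
  have Nc: "N \<subseteq> carrier G" by (simp add: nN.subset)
  define T where "T = {x [^] p | x. x \<in> N}"
  have Tc: "T \<subseteq> carrier G" using Nc unfolding T_def by auto
  have sg: "subgroup (power_sub G p N) G"
    unfolding power_sub_def T_def[symmetric] by (rule generate_is_subgroup[OF Tc])
  have "\<forall>g\<in>carrier G. \<forall>h\<in>power_sub G p N. g \<otimes> h \<otimes> inv g \<in> power_sub G p N"
  proof (intro ballI)
    fix g h assume g: "g \<in> carrier G" and h: "h \<in> power_sub G p N"
    define f where "f = (\<lambda>x. g \<otimes> x \<otimes> inv g)"
    have fh: "f \<in> hom G G" unfolding f_def by (rule conj_hom[OF assms(1) g])
    interpret gh: group_hom G G f by (unfold_locales) (rule fh)
    have "f ` T \<subseteq> T"
    proof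
      fix z assume "z \<in> f ` T"
      then obtain x where x: "x \<in> N" "z = f (x [^] p)" unfolding T_def by auto
      have "z = (f x) [^] p" using x Nc gh.hom_nat_pow by auto
      moreover have "f x \<in> N" using x g nN.inv_op_closed2 unfolding f_def by auto
      ultimately show "z \<in> T" unfolding T_def by auto
    qed
    hence "generate G (f ` T) \<subseteq> generate G T" by (rule mono_generate)
    moreover have "f h \<in> f ` generate G T" using h unfolding power_sub_def T_def by auto
    ultimately show "g \<otimes> h \<otimes> inv g \<in> power_sub G p N"
      using gh.generate_img[OF Tc] unfolding power_sub_def T_def[symmetric] f_def by auto
  qed
  thus ?thesis using sg normal_inv_iff by blast
qed


lemma comm_identity:
  fixes G (structure)
  assumes "group G" "v \<in> carrier G" "u \<in> carrier G" "b \<in> carrier G"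
  shows "inv (v \<otimes> u) \<otimes> inv b \<otimes> (v \<otimes> u) \<otimes> b =
         (inv u \<otimes> (inv v \<otimes> inv b \<otimes> v \<otimes> b) \<otimes> u) \<otimes> (inv u \<otimes> inv b \<otimes> u \<otimes> b)"
proof -
  interpret group G by fact
  have c1[simp]: "\<And>x y. x \<in> carrier G \<Longrightarrow> y \<in> carrier G \<Longrightarrow> x \<otimes> (inv x \<otimes> y) = y"
    by (simp flip: m_assoc)
  have c2[simp]: "\<And>x y. x \<in> carrier G \<Longrightarrow> y \<in> carrier G \<Longrightarrow> inv x \<otimes> (x \<otimes> y) = y"
    by (simp flip: m_assoc)
  have "inv u \<otimes> (inv v \<otimes> inv b \<otimes> v \<otimes> b) \<otimes> u \<otimes> (inv u \<otimes> inv b \<otimes> u \<otimes> b)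
      = inv u \<otimes> inv v \<otimes> inv b \<otimes> v \<otimes> (b \<otimes> (u \<otimes> inv u) \<otimes> inv b) \<otimes> u \<otimes> b"
    using assms by (simp add: m_assoc)
  also have "\<dots> = inv u \<otimes> inv v \<otimes> inv b \<otimes> v \<otimes> u \<otimes> b"
    using assms by (simp add: m_assoc)
  also have "\<dots> = inv (v \<otimes> u) \<otimes> inv b \<otimes> (v \<otimes> u) \<otimes> b"
    using assms by (simp add: m_assoc inv_mult_group)
  finally show ?thesis by simp
qed

lemma comm_normal:
  fixes G (structure)
  assumes "group G" "Q \<lhd> G" "a \<in> Q" "b \<in> carrier G"
  shows "inv a \<otimes> inv b \<otimes> a \<otimes> b \<in> Q"
proof -
  interpret group G by fact
  interpret normal Q G by fact
  have a: "a \<in> carrier G" using assms(3) subset by auto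
  have "inv b \<otimes> a \<otimes> b \<in> Q" using inv_op_closed1 assms by auto
  moreover have "inv a \<in> Q" using assms(3) by simp
  ultimately have "inv a \<otimes> (inv b \<otimes> a \<otimes> b) \<in> Q" by simp
  thus ?thesis using a assms(4) by (simp add: m_assoc)
qed

lemma comm_sub_le:
  fixes G (structure)
  assumes "group G" "subgroup Q G"
    and "\<And>a b. a \<in> A \<Longrightarrow> b \<in> carrier G \<Longrightarrow> inv a \<otimes> inv b \<otimes> a \<otimes> b \<in> Q"
  shows "comm_sub G A (carrier G) \<subseteq> Q"
proof -
  interpret group G by fact
  show ?thesis unfolding comm_sub_def
    by (rule generate_subgroup_incl[OF _ assms(2)]) (use assms(3) in blast)
qed

lemma quot_comm:
  fixes G (structure)
  assumes "group G" "H \<lhd> G" "K \<lhd> G"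
    and pe: "powerfully_embedded (G Mod H) p ((\<lambda>x. H #> x) ` K)" and "p \<noteq> 2"
    and v: "v \<in> K" and b: "b \<in> carrier G"
  shows "inv v \<otimes> inv b \<otimes> v \<otimes> b \<in> H <#> generate G {x [^] p | x. x \<in> K}"
proof -
  interpret group G by fact
  interpret nH: normal H G by fact
  interpret nK: normal K G by fact
  interpret Q: group "G Mod H" by (rule nH.factorgroup_is_group)
  interpret gh: group_hom G "G Mod H" "\<lambda>x. H #> x"
    by unfold_locales (rule nH.r_coset_hom_Mod)
  define \<phi> where "\<phi> = (\<lambda>x. H #> x)"
  define T where "T = {x [^] p | x. x \<in> K}"
  have vc: "v \<in> carrier G" using v nK.subset by auto
  have Tc: "T \<subseteq> carrier G" using nK.subset unfolding T_def by auto
  define c where "c = inv v \<otimes> inv b \<otimes> v \<otimes> b"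
  have cc: "c \<in> carrier G" using vc b unfolding c_def by simp
  have "\<phi> c = inv\<^bsub>G Mod H\<^esub> (\<phi> v) \<otimes>\<^bsub>G Mod H\<^esub> inv\<^bsub>G Mod H\<^esub> (\<phi> b) \<otimes>\<^bsub>G Mod H\<^esub> \<phi> v \<otimes>\<^bsub>G Mod H\<^esub> \<phi> b"
    unfolding c_def \<phi>_def using vc b by (simp add: gh.hom_mult gh.hom_inv)
  moreover have "\<phi> b \<in> carrier (G Mod H)" using b gh.hom_closed unfolding \<phi>_def by blast
  ultimately have "\<phi> c \<in> comm_sub (G Mod H) (\<phi> ` K) (carrier (G Mod H))"
    unfolding comm_sub_def using v by (intro generate.incl) blast
  hence "\<phi> c \<in> power_sub (G Mod H) p (\<phi> ` K)"
    using pe \<open>p \<noteq> 2\<close> unfolding powerfully_embedded_def \<phi>_def by auto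
  moreover have "{Y [^]\<^bsub>G Mod H\<^esub> p | Y. Y \<in> \<phi> ` K} = \<phi> ` T"
  proof -
    have e: "\<And>x. x \<in> K \<Longrightarrow> (H #> x) [^]\<^bsub>G Mod H\<^esub> p = H #> (x [^] p)"
      using nK.subset gh.hom_nat_pow by auto
    show ?thesis unfolding T_def \<phi>_def using e by auto
  qed
  ultimately have "\<phi> c \<in> \<phi> ` generate G T"
    unfolding power_sub_def using gh.generate_img[OF Tc] unfolding \<phi>_def by simp
  then obtain y where y: "y \<in> generate G T" "H #> c = H #> y" unfolding \<phi>_def by auto
  have "c \<in> H #> c" using cc nH.subgroup_axioms by (rule rcos_self)
  hence "c \<in> H #> y" using y by simp
  then obtain h where "h \<in> H" "c = h \<otimes> y" unfolding r_coset_def by auto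
  thus ?thesis using y(1) unfolding c_def T_def set_mult_def by auto
qed



lemma lemma2p2_aux:
  fixes P (structure) and p j :: nat and N :: "'a set"
  assumes "Factorial_Ring.prime p" and "odd p"
    and "finite_p_group P p"
    and "N \<lhd> P"
    and "j \<ge> 1"
    and "\<exists>k\<le>j. \<exists>Ns. eta_series P p Ns \<and> Ns k = N"
  shows "comm_iter P N j \<subseteq> power_sub P p N"
proof -
  from assms(6) obtain k Ns where kj: "k \<le> j" and eta: "eta_series P p Ns" and NK: "Ns k = N"
    by blast
  have grp: "group P" using assms(3) unfolding finite_p_group_def by blast
  interpret group P by (rule grp)
  have p2: "p \<noteq> 2" using assms(2) by auto
  define Np where "Np = power_sub P p N"
  have Npn: "Np \<lhd> P" unfolding Np_def by (rule power_sub_normal[OF grp assms(4)])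
  interpret nNp: normal Np P by (rule Npn)
  have Ns0: "Ns 0 = {\<one>}" and nNs: "\<And>i. Ns i \<lhd> P"
    and incl: "\<And>i. Ns i \<subseteq> Ns (Suc i)"
    and pe: "\<And>i. powerfully_embedded (P Mod (Ns i)) p ((\<lambda>x. Ns i #> x) ` Ns (Suc i))"
    using eta unfolding eta_series_def by auto
  have mono: "\<And>i. i \<le> k \<Longrightarrow> Ns i \<subseteq> N"
    using lift_Suc_mono_le[of Ns, OF incl] NK by metis
  define M where "M i = Ns i <#> Np" for i
  have sgM: "\<And>i. subgroup (M i) P"
    unfolding M_def using mult_norm_subgroup nNs nNp.subgroup_axioms by blast
  have NpM: "\<And>i. Np \<subseteq> M i"
  proof
    fix i x assume "x \<in> Np"
    moreover have "\<one> \<in> Ns i" using nNs normal_imp_subgroup subgroup.one_closed by blast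
    moreover have "x = \<one> \<otimes> x" using \<open>x \<in> Np\<close> nNp.subset by auto
    ultimately show "x \<in> M i" unfolding M_def set_mult_def by blast
  qed
  have M0: "M 0 \<subseteq> Np"
    unfolding M_def Ns0 set_mult_def using nNp.subset by auto
  have Nk: "N \<subseteq> M k"
  proof
    fix x assume "x \<in> N"
    moreover have "\<one> \<in> Np" by simp
    moreover have "x = x \<otimes> \<one>" using \<open>x \<in> N\<close> normal_imp_subgroup[OF assms(4)] subgroup.mem_carrier by force
    ultimately show "x \<in> M k" unfolding M_def set_mult_def NK by blast
  qed
  have C: "inv v \<otimes> inv b \<otimes> v \<otimes> b \<in> M i"
    if "i < k" "v \<in> Ns (Suc i)" "b \<in> carrier P" for i v b
  proof -
    have "inv v \<otimes> inv b \<otimes> v \<otimes> b \<in> Ns i <#> generate P {x [^] p | x. x \<in> Ns (Suc i)}"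
      by (rule quot_comm[OF grp nNs nNs pe p2 that(2,3)])
    moreover have "generate P {x [^] p | x. x \<in> Ns (Suc i)} \<subseteq> Np"
      unfolding Np_def power_sub_def
      by (rule mono_generate) (use mono[of "Suc i"] that(1) in auto)
    ultimately show ?thesis unfolding M_def set_mult_def by blast
  qed
  have D: "inv a \<otimes> inv b \<otimes> a \<otimes> b \<in> M i"
    if hh: "i < k" "a \<in> M (Suc i)" "b \<in> carrier P" for i a b
  proof -
    obtain v u where vu: "v \<in> Ns (Suc i)" "u \<in> Np" "a = v \<otimes> u"
      using hh(2) unfolding M_def set_mult_def by blast
    have vc: "v \<in> carrier P" using vu(1) by (meson normal_imp_subgroup nNs subgroup.mem_carrier)
    have uc: "u \<in> carrier P" using vu(2) nNp.subset by auto
    have c1: "inv v \<otimes> inv b \<otimes> v \<otimes> b \<in> M i" by (rule C[OF hh(1) vu(1) hh(3)])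
    have uM: "u \<in> M i" using NpM vu(2) by auto
    have "inv u \<otimes> (inv v \<otimes> inv b \<otimes> v \<otimes> b) \<otimes> u \<in> M i"
      using c1 uM sgM[of i] by (meson subgroup.m_closed subgroup.m_inv_closed)
    moreover have "inv u \<otimes> inv b \<otimes> u \<otimes> b \<in> M i"
      using comm_normal[OF grp Npn vu(2) hh(3)] NpM by auto
    ultimately show ?thesis
      using comm_identity[OF grp vc uc hh(3)] vu(3) sgM[of i] by (simp add: subgroup.m_closed)
  qed
  have I1: "m \<le> k \<Longrightarrow> comm_iter P N m \<subseteq> M (k - m)" for m
  proof (induction m)
    case 0 then show ?case using Nk by simp
  next
    case (Suc m)
    have km: "k - m = Suc (k - Suc m)" using Suc.prems by simp
    have "comm_iter P N m \<subseteq> M (Suc (k - Suc m))" using Suc km by simp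
    then show ?case
      using D[of "k - Suc m"] Suc.prems
      by (auto intro!: comm_sub_le[OF grp sgM])
  qed
  have I2: "comm_iter P N (k + d) \<subseteq> Np" for d
  proof (induction d)
    case 0 then show ?case using I1[of k] M0 by simp
  next
    case (Suc d)
    then show ?case
      using comm_normal[OF grp Npn] by (auto intro!: comm_sub_le[OF grp nNp.subgroup_axioms])
  qed
  show ?thesis using I2[of "j - k"] kj unfolding Np_def by simp
qed


theorem lemma2p2:
  fixes P :: "('a, 'b) monoid_scheme" and p j :: nat and N :: "'a set"
  assumes "Factorial_Ring.prime p" and "odd p"
    and "finite_p_group P p"
    and "N \<lhd> P"
    and "j \<ge> 1"
    and "\<exists>k\<le>j. \<exists>Ns. eta_series P p Ns \<and> Ns k = N"
  shows "comm_iter P N j \<subseteq> power_sub P p N"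
  using assms by (rule lemma2p2_aux)

end
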